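(* Let $G\subsetneq\mathbb{R}^n$ be a domain and let $p\ge 1$. Then for all points $z_1,z_2\in G$, \[ s_G(z_1,z_2)\le b_{G,p}(z_1,z_2)\le 2^{1-1/p}\,s_G(z_1,z_2). \]
   Context: For a domain $G\subsetneq\mathbb{R}^n$, $p\ge1$ and $z_1,z_2\in G$, the Barrlund metric is \[ b_{G,p}(z_1,z_2)=\sup_{z\in\partial G}\frac{|z_1-z_2|}{\sqrt[p]{|z_1-z|^p+|z-z_2|^p}}, \] and the triangular ratio metric is $s_G(z_1,z_2)=b_{G,1}(z_1,z_2)=\sup_{z\in\partial G}\frac{|z_1-z_2|}{|z_1-z|+|z-z_2|}$. *)

theory Defs
  imports "HOL-Analysis.Analysis"
begin

definition barrlund :: "'a::euclidean_space set \<Rightarrow> real \<Rightarrow> 'a \<Rightarrow> 'a \<Rightarrow> real" where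
  "barrlund G p z1 z2 =
     (SUP z\<in>frontier G. dist z1 z2 / ((dist z1 z powr p + dist z z2 powr p) powr (1 / p)))"

definition triangular_ratio :: "'a::euclidean_space set \<Rightarrow> 'a \<Rightarrow> 'a \<Rightarrow> real" where
  "triangular_ratio G z1 z2 = (SUP z\<in>frontier G. dist z1 z2 / (dist z1 z + dist z z2))"

end

theory Submission
  imports Defs
begin

lemma ineq1:
  fixes a b p :: real
  assumes "a > 0" "b > 0" "p \<ge> 1"
  shows "(a powr p + b powr p) powr (1/p) \<le> a + b"
proof -
  have "a powr p = a * a powr (p-1)" using assms by (simp add: powr_diff)
  also have "\<dots> \<le> a * (a+b) powr (p-1)"
    using assms by (intro mult_left_mono powr_mono2) auto
  finally have 1: "a powr p \<le> a * (a+b) powr (p-1)" .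
  have "b powr p = b * b powr (p-1)" using assms by (simp add: powr_diff)
  also have "\<dots> \<le> b * (a+b) powr (p-1)"
    using assms by (intro mult_left_mono powr_mono2) auto
  finally have 2: "b powr p \<le> b * (a+b) powr (p-1)" .
  have 3: "(a+b) * (a+b) powr (p-1) = (a+b) powr p" using assms by (simp add: powr_diff)
  have "a powr p + b powr p \<le> (a+b) powr p" using 1 2 3 by (simp add: distrib_right)
  hence "(a powr p + b powr p) powr (1/p) \<le> ((a+b) powr p) powr (1/p)"
    using assms by (intro powr_mono2) auto
  also have "\<dots> = a + b" using assms by (simp add: powr_powr)
  finally show ?thesis .
qed

lemma ineq2:
  fixes a b p :: real
  assumes "a > 0" "b > 0" "p \<ge> 1"
  shows "a + b \<le> 2 powr (1 - 1/p) * (a powr p + b powr p) powr (1/p)"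
proof -
  have "((1 - 1/2) *\<^sub>R a + (1/2) *\<^sub>R b) powr p \<le> (1 - 1/2) * a powr p + (1/2) * b powr p"
    using convex_onD[OF powr_convex[OF assms(3)], of "1/2" a b] assms by auto
  hence c: "((a+b)/2) powr p \<le> (a powr p + b powr p)/2" by (simp add: field_simps)
  have "(a+b)/2 = (((a+b)/2) powr p) powr (1/p)" using assms by (simp add: powr_powr)
  also have "\<dots> \<le> ((a powr p + b powr p)/2) powr (1/p)"
    using assms c by (intro powr_mono2) auto
  also have "\<dots> = (a powr p + b powr p) powr (1/p) / 2 powr (1/p)"
    using assms by (simp add: powr_divide)
  finally have "a + b \<le> 2 * (a powr p + b powr p) powr (1/p) / 2 powr (1/p)"
    by (simp add: field_simps)
  also have "\<dots> = 2 powr (1 - 1/p) * (a powr p + b powr p) powr (1/p)"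
    by (simp add: powr_diff)
  finally show ?thesis .
qed

lemma aux_div:
  fixes d M s c :: real
  assumes "d \<ge> 0" "M > 0" "s > 0" "s \<le> c * M"
  shows "d / M \<le> c * (d / s)"
proof -
  have "d * s \<le> d * (c * M)" using assms by (intro mult_left_mono) auto
  thus ?thesis using assms by (simp add: field_simps)
qed

theorem theorem1p1:
  fixes G :: "'a::euclidean_space set" and p :: real and z1 z2 :: 'a
  assumes "open G" and "connected G" and "G \<noteq> {}" and "G \<noteq> UNIV"
    and "p \<ge> 1" and "z1 \<in> G" and "z2 \<in> G"
  shows "triangular_ratio G z1 z2 \<le> barrlund G p z1 z2
         \<and> barrlund G p z1 z2 \<le> 2 powr (1 - 1 / p) * triangular_ratio G z1 z2"
proof -
  define F where "F = frontier G"
  have Fne: "F \<noteq> {}" using frontier_not_empty assms unfolding F_def by blast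
  have pos: "dist z1 z > 0" "dist z z2 > 0" if "z \<in> F" for z
    using that assms frontier_disjoint_eq[of G] unfolding F_def by auto
  define S where "S z = dist z1 z2 / (dist z1 z + dist z z2)" for z
  define B where "B z = dist z1 z2 / ((dist z1 z powr p + dist z z2 powr p) powr (1 / p))" for z
  define c where "c = 2 powr (1 - 1 / p)"
  have c0: "c > 0" unfolding c_def by simp
  have SB: "S z \<le> B z" if "z \<in> F" for z
  proof -
    have a: "dist z1 z > 0" "dist z z2 > 0" using pos[OF that] by auto
    have "0 < dist z1 z powr p + dist z z2 powr p" using a by (intro add_pos_pos) auto
    hence M: "(dist z1 z powr p + dist z z2 powr p) powr (1 / p) > 0" by simp
    have "(dist z1 z powr p + dist z z2 powr p) powr (1 / p) \<le> dist z1 z + dist z z2"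
      using ineq1 a assms(5) by auto
    moreover have "0 < dist z1 z + dist z z2" using a by linarith
    ultimately show ?thesis unfolding S_def B_def using M
      by (meson divide_left_mono mult_pos_pos zero_le_dist)
  qed
  have BS: "B z \<le> c * S z" if "z \<in> F" for z
  proof -
    have "0 < dist z1 z powr p + dist z z2 powr p" using pos[OF that] by (intro add_pos_pos) auto
    hence M: "(dist z1 z powr p + dist z z2 powr p) powr (1 / p) > 0" by simp
    have "dist z1 z + dist z z2 \<le> c * (dist z1 z powr p + dist z z2 powr p) powr (1 / p)"
      unfolding c_def using ineq2 pos[OF that] assms(5) by auto
    moreover have "0 < dist z1 z + dist z z2" using pos[OF that] by linarith
    ultimately show ?thesis unfolding B_def S_def using M
      by (intro aux_div) auto
  qed
  have S1: "S z \<le> 1" if "z \<in> F" for z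
  proof -
    have "0 < dist z1 z + dist z z2" using pos[OF that] by linarith
    moreover have "dist z1 z2 \<le> dist z1 z + dist z z2" by (rule dist_triangle)
    ultimately show ?thesis unfolding S_def by simp
  qed
  have bS: "bdd_above (S ` F)" using S1 by (intro bdd_aboveI2[where M=1]) auto
  have bB: "bdd_above (B ` F)" using BS S1 c0
    by (intro bdd_aboveI2[where M=c]) (smt (verit) mult_left_le)
  have t: "triangular_ratio G z1 z2 = (SUP z\<in>F. S z)"
    unfolding triangular_ratio_def F_def S_def ..
  have b: "barrlund G p z1 z2 = (SUP z\<in>F. B z)"
    unfolding barrlund_def F_def B_def ..
  have 1: "(SUP z\<in>F. S z) \<le> (SUP z\<in>F. B z)"
    using Fne bB SB by (intro cSUP_mono) auto
  have 2: "(SUP z\<in>F. B z) \<le> c * (SUP z\<in>F. S z)"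
  proof (rule cSUP_least[OF Fne])
    fix z assume "z \<in> F"
    have "S z \<le> (SUP z\<in>F. S z)" using bS \<open>z \<in> F\<close> by (rule cSUP_upper2) simp
    thus "B z \<le> c * (SUP z\<in>F. S z)" using BS[OF \<open>z \<in> F\<close>] c0
      by (meson mult_left_mono less_imp_le order_trans)
  qed
  show ?thesis using 1 2 t b c_def by simp
qed

end
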